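(* Let $n\ge 1$ and let $W\in\mathbb{C}^{2n\times 2n}$ be a normal skew-Hamiltonian matrix all of whose eigenvalues have nonzero imaginary parts. Then there exist a unitary symplectic matrix $U\in\mathbb{C}^{2n\times 2n}$ and a diagonal matrix $D\in\mathbb{C}^{n\times n}$ such that $$W=U\begin{bmatrix} D & 0\\ 0 & D^H\end{bmatrix}U^H .$$
   Context: Let $J=J_{2n}=\begin{bmatrix}0 & I_n\\ -I_n & 0\end{bmatrix}\in\mathbb{R}^{2n\times 2n}$. A matrix $A\in\mathbb{C}^{2n\times 2n}$ is Hamiltonian if $(JA)^H=JA$ and skew-Hamiltonian if $(JA)^H=-JA$. A matrix $Z\in\mathbb{C}^{2n\times 2n}$ is symplectic if $Z^HJZ=J$. "Unitary symplectic" means both unitary and symplectic. *)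

theory Defs
  imports "Jordan_Normal_Form.Matrix" "Jordan_Normal_Form.Char_Poly"
begin

definition conj_tr :: "complex mat \<Rightarrow> complex mat" where
  "conj_tr A = mat (dim_col A) (dim_row A) (\<lambda>(i,j). cnj (A $$ (j,i)))"

definition J_mat :: "nat \<Rightarrow> complex mat" where
  "J_mat n = four_block_mat (0\<^sub>m n n) (1\<^sub>m n) (- 1\<^sub>m n) (0\<^sub>m n n)"

definition hamiltonian :: "nat \<Rightarrow> complex mat \<Rightarrow> bool" where
  "hamiltonian n A \<longleftrightarrow> A \<in> carrier_mat (2*n) (2*n) \<and>
     conj_tr (J_mat n * A) = J_mat n * A"

definition skew_hamiltonian :: "nat \<Rightarrow> complex mat \<Rightarrow> bool" where
  "skew_hamiltonian n A \<longleftrightarrow> A \<in> carrier_mat (2*n) (2*n) \<and>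
     conj_tr (J_mat n * A) = - (J_mat n * A)"

definition symplectic :: "nat \<Rightarrow> complex mat \<Rightarrow> bool" where
  "symplectic n Z \<longleftrightarrow> Z \<in> carrier_mat (2*n) (2*n) \<and>
     conj_tr Z * J_mat n * Z = J_mat n"

definition unitary_mat :: "complex mat \<Rightarrow> bool" where
  "unitary_mat U \<longleftrightarrow> square_mat U \<and> conj_tr U * U = 1\<^sub>m (dim_row U)
     \<and> U * conj_tr U = 1\<^sub>m (dim_row U)"

definition normal_mat :: "complex mat \<Rightarrow> bool" where
  "normal_mat A \<longleftrightarrow> square_mat A \<and> A * conj_tr A = conj_tr A * A"

end

theory Submission
  imports Defs "Jordan_Normal_Form.Schur_Decomposition" "Jordan_Normal_Form.Spectral_Radius"
begin


lemma conj_tr_carrier[simp]: "A \<in> carrier_mat r c \<Longrightarrow> conj_tr A \<in> carrier_mat c r"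
  unfolding conj_tr_def by auto
lemma conj_tr_dims[simp]: "dim_row (conj_tr A) = dim_col A" "dim_col (conj_tr A) = dim_row A"
  unfolding conj_tr_def by auto
lemma conj_tr_index[simp]: "i < dim_col A \<Longrightarrow> j < dim_row A \<Longrightarrow> conj_tr A $$ (i,j) = cnj (A $$ (j,i))"
  unfolding conj_tr_def by auto
lemma conj_tr_conj_tr[simp]: "conj_tr (conj_tr A) = A"
  by (rule eq_matI, auto)
lemma conj_tr_mult: assumes "A \<in> carrier_mat a b" "B \<in> carrier_mat b c"
  shows "conj_tr (A * B) = conj_tr B * conj_tr A"
proof (rule eq_matI)
  fix i j assume ij: "i < dim_row (conj_tr B * conj_tr A)" "j < dim_col (conj_tr B * conj_tr A)"
  then have i: "i < c" and j: "j < a" using assms by auto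
  have "conj_tr (A * B) $$ (i,j) = cnj (row A j \<bullet> col B i)" using assms i j by simp
  also have "\<dots> = (\<Sum>k<b. cnj (A $$ (j,k)) * cnj (B $$ (k,i)))"
    using assms i j by (simp add: scalar_prod_def atLeast0LessThan)
  also have "\<dots> = row (conj_tr B) i \<bullet> col (conj_tr A) j"
    using assms i j by (simp add: scalar_prod_def atLeast0LessThan mult.commute)
  finally show "conj_tr (A * B) $$ (i, j) = (conj_tr B * conj_tr A) $$ (i, j)"
    using assms i j by simp
qed (use assms in auto)
lemma conj_tr_one[simp]: "conj_tr (1\<^sub>m n) = 1\<^sub>m n"
  by (rule eq_matI, auto)




lemma conj_tr_mult_index:
  assumes "X \<in> carrier_mat r a" "Y \<in> carrier_mat r b" "i < a" "j < b"
  shows "(conj_tr X * Y) $$ (i,j) = (\<Sum>k<r. cnj (X $$ (k,i)) * Y $$ (k,j))"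
  using assms by (simp add: scalar_prod_def atLeast0LessThan)

lemma unitary_first_col:
  fixes u :: "complex vec"
  assumes u: "u \<in> carrier_vec m" and u1: "u \<bullet>c u = 1" and m: "m > 0"
  shows "\<exists>W. W \<in> carrier_mat m m \<and> conj_tr W * W = 1\<^sub>m m \<and> W * conj_tr W = 1\<^sub>m m \<and> col W 0 = u"
proof -
  interpret cof_vec_space m "TYPE(complex)" .
  have u0: "u \<noteq> 0\<^sub>v m" using u1 by auto
  define bc where "bc = basis_completion u"
  note bcr = basis_completion[OF u u0, folded bc_def]
  define ws where "ws = gram_schmidt m bc"
  from gram_schmidt_result[OF bcr(2) bcr(4) bcr(5) ws_def]
  have ws: "corthogonal ws" "set ws \<subseteq> carrier_vec m" "length ws = m" by (auto simp: bcr)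
  from bcr(6,7) m obtain vs where bcv: "bc = u # vs" by (cases bc, auto)
  have hdws: "hd ws = u" unfolding ws_def bcv using u by simp
  define nz :: "complex vec \<Rightarrow> complex vec" where
    "nz w = complex_of_real (1 / sqrt (Re (w \<bullet>c w))) \<cdot>\<^sub>v w" for w
  define ws' where "ws' = map nz ws"
  define W where "W = mat_of_cols m ws'"
  have wsi: "ws ! i \<in> carrier_vec m" if "i < m" for i using ws that by auto
  have W: "W \<in> carrier_mat m m" unfolding W_def ws'_def using ws by auto
  have colW: "col W i = nz (ws ! i)" if "i < m" for i
    unfolding W_def ws'_def using that ws wsi[OF that] by (simp add: nz_def)
  have Wij: "W $$ (k,i) = nz (ws ! i) $ k" if "i < m" "k < m" for i k
    using colW[OF that(1)] W that by (metis carrier_matD col_def index_vec)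
  have sp: "(\<Sum>k<m. cnj (nz (ws!i) $ k) * nz (ws!j) $ k) = (if i = j then 1 else 0)"
    if ij: "i < m" "j < m" for i j
  proof -
    let ?a = "1 / sqrt (Re (ws!i \<bullet>c ws!i))"
    let ?b = "1 / sqrt (Re (ws!j \<bullet>c ws!j))"
    have "(\<Sum>k<m. cnj (nz (ws!i) $ k) * nz (ws!j) $ k)
       = complex_of_real ?a * complex_of_real ?b * (\<Sum>k<m. ws!j $ k * cnj (ws!i $ k))"
      using wsi[OF ij(1)] wsi[OF ij(2)]
      by (simp add: nz_def sum_distrib_left sum_divide_distrib algebra_simps)
    also have "(\<Sum>k<m. ws!j $ k * cnj (ws!i $ k)) = ws!j \<bullet>c ws!i"
      using wsi[OF ij(1)] wsi[OF ij(2)] by (simp add: scalar_prod_def atLeast0LessThan)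
    finally have eq: "(\<Sum>k<m. cnj (nz (ws!i) $ k) * nz (ws!j) $ k)
       = complex_of_real ?a * complex_of_real ?b * (ws!j \<bullet>c ws!i)" .
    show ?thesis
    proof (cases "i = j")
      case True
      have ne: "ws!i \<bullet>c ws!i \<noteq> 0" using corthogonalD[OF ws(1), of i i] ws(3) ij by auto
      have ge: "ws!i \<bullet>c ws!i \<ge> 0" by (rule conjugate_square_ge_0_vec)
      then obtain r where r: "ws!i \<bullet>c ws!i = complex_of_real r" "r > 0" using ne
        by (metis complex_is_Real_iff less_eq_complex_def Re_complex_of_real order_le_less zero_complex.sel(1) zero_complex.sel(2) complex_eq_iff Im_complex_of_real)
      have rr: "(1/sqrt r)*(1/sqrt r)*r = 1" using r(2)
        by (simp add: field_simps)
      have "complex_of_real (1/sqrt r) * complex_of_real (1/sqrt r) * complex_of_real r = 1"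
        by (metis rr of_real_mult of_real_1)
      then show ?thesis using True eq r by simp
    next
      case False
      then have "ws!j \<bullet>c ws!i = 0" using corthogonalD[OF ws(1), of j i] ws(3) ij by auto
      then show ?thesis using eq False by simp
    qed
  qed
  have WW: "conj_tr W * W = 1\<^sub>m m"
  proof (rule eq_matI)
    fix i j assume "i < dim_row (1\<^sub>m m)" "j < dim_col (1\<^sub>m m)"
    then have ij: "i < m" "j < m" by auto
    have "(conj_tr W * W) $$ (i,j) = (\<Sum>k<m. cnj (W $$ (k,i)) * W $$ (k,j))"
      by (rule conj_tr_mult_index[OF W W ij])
    also have "\<dots> = (\<Sum>k<m. cnj (nz (ws!i) $ k) * nz (ws!j) $ k)"
      by (rule sum.cong, auto simp: Wij ij)
    finally show "(conj_tr W * W) $$ (i,j) = 1\<^sub>m m $$ (i,j)" using sp[OF ij] ij by simp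
  qed (insert W, auto)
  have WW': "W * conj_tr W = 1\<^sub>m m"
    using mat_mult_left_right_inverse[OF conj_tr_carrier[OF W] W WW] W by auto
  have "col W 0 = nz u" using colW[OF m] hdws ws(3) m by (cases ws, auto)
  also have "nz u = u" using u1 by (simp add: nz_def)
  finally show ?thesis using W WW WW' by blast
qed




lemma bd_mult:
  assumes "A1 \<in> carrier_mat a b" "D1 \<in> carrier_mat c d" "A2 \<in> carrier_mat b e" "D2 \<in> carrier_mat d f"
  shows "four_block_mat A1 (0\<^sub>m a d) (0\<^sub>m c b) D1 * four_block_mat A2 (0\<^sub>m b f) (0\<^sub>m d e) D2
    = four_block_mat (A1 * A2) (0\<^sub>m a f) (0\<^sub>m c e) (D1 * D2 :: 'x :: comm_ring_1 mat)"
  by (subst mult_four_block_mat[of _ a b _ d _ c], insert assms, auto)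

lemma bd_conj_tr:
  assumes "A \<in> carrier_mat a b" "D \<in> carrier_mat c d"
  shows "conj_tr (four_block_mat A (0\<^sub>m a d) (0\<^sub>m c b) D) = four_block_mat (conj_tr A) (0\<^sub>m b c) (0\<^sub>m d a) (conj_tr D)"
  by (rule eq_matI, insert assms, auto simp: conj_tr_def)

lemma bd_D:
  assumes "A \<in> carrier_mat a b" "D \<in> carrier_mat c d" "A' \<in> carrier_mat a b" "D' \<in> carrier_mat c d"
    and "four_block_mat A B C D = four_block_mat A' B' C' D'"
  shows "D = D'"
proof (rule eq_matI)
  fix i j assume ij: "i < dim_row D'" "j < dim_col D'"
  have e1: "four_block_mat A B C D $$ (i+a, j+b) = D $$ (i,j)" using assms ij by (subst index_mat_four_block) auto
  have e2: "four_block_mat A' B' C' D' $$ (i+a, j+b) = D' $$ (i,j)" using assms ij by (subst index_mat_four_block) auto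
  show "D $$ (i,j) = D' $$ (i,j)" using e1 e2 assms(5) by simp
qed (insert assms, auto)

lemma cancel_left:
  assumes "X \<in> carrier_mat a b" "Y \<in> carrier_mat b a" "X * Y = 1\<^sub>m a" "Z \<in> carrier_mat a c"
  shows "X * (Y * Z) = (Z :: 'x :: comm_ring_1 mat)"
proof -
  have "X * (Y * Z) = (X * Y) * Z" using assoc_mult_mat[OF assms(1,2,4)] by simp
  then show ?thesis using assms by simp
qed

lemma normalize_vec:
  fixes v :: "complex vec"
  assumes v: "v \<in> carrier_vec m" "v \<noteq> 0\<^sub>v m"
  shows "\<exists>c. c \<noteq> 0 \<and> (c \<cdot>\<^sub>v v) \<bullet>c (c \<cdot>\<^sub>v v) = 1"
proof -
  have ge: "v \<bullet>c v \<ge> 0" by (rule conjugate_square_ge_0_vec)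
  have ne: "v \<bullet>c v \<noteq> 0" using v by (metis conjugate_square_eq_0_vec)
  obtain r where r: "v \<bullet>c v = complex_of_real r" "r > 0" using ge ne
    by (metis complex_is_Real_iff less_eq_complex_def Re_complex_of_real order_le_less zero_complex.sel(1) zero_complex.sel(2) complex_eq_iff Im_complex_of_real)
  define c where "c = complex_of_real (1 / sqrt r)"
  have rr: "(1/sqrt r)*(1/sqrt r)*r = 1" using r(2) by (simp add: field_simps)
  have "c * cnj c * complex_of_real r = 1" unfolding c_def
    by (metis rr of_real_mult of_real_1 complex_cnj_complex_of_real)
  moreover have "(c \<cdot>\<^sub>v v) \<bullet>c (c \<cdot>\<^sub>v v) = c * cnj c * (v \<bullet>c v)"
    using v by (simp add: conjugate_smult_vec)
  moreover have "c \<noteq> 0" using r unfolding c_def by simp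
  ultimately show ?thesis using r by auto
qed




lemma spectral:
  fixes A :: "complex mat"
  assumes "A \<in> carrier_mat m m" "A * conj_tr A = conj_tr A * A"
  shows "\<exists>Q L. Q \<in> carrier_mat m m \<and> L \<in> carrier_mat m m \<and> diagonal_mat L \<and>
    conj_tr Q * Q = 1\<^sub>m m \<and> Q * conj_tr Q = 1\<^sub>m m \<and> A = Q * L * conj_tr Q"
  using assms
proof (induction m arbitrary: A)
  case 0
  then show ?case
    by (intro exI[of _ "1\<^sub>m 0"] exI[of _ A], auto simp: diagonal_mat_def)
next
  case (Suc k A)
  let ?m = "Suc k"
  have A: "A \<in> carrier_mat ?m ?m" and nA: "A * conj_tr A = conj_tr A * A" using Suc.prems by auto
  from spectrum_non_empty[OF A] obtain e where "eigenvalue A e" unfolding spectrum_def by auto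
  from find_eigenvector[OF A this] obtain v where ev: "eigenvector A v e" by blast
  then have v: "v \<in> carrier_vec ?m" "v \<noteq> 0\<^sub>v ?m" "A *\<^sub>v v = e \<cdot>\<^sub>v v"
    unfolding eigenvector_def using A by auto
  from normalize_vec[OF v(1,2)] obtain c where c: "c \<noteq> 0" "(c \<cdot>\<^sub>v v) \<bullet>c (c \<cdot>\<^sub>v v) = 1" by blast
  define u where "u = c \<cdot>\<^sub>v v"
  have u: "u \<in> carrier_vec ?m" "u \<bullet>c u = 1" "A *\<^sub>v u = e \<cdot>\<^sub>v u"
    using v c A unfolding u_def by (auto simp: mult_mat_vec smult_smult_assoc mult.commute)
  from unitary_first_col[OF u(1,2)] obtain W where W: "W \<in> carrier_mat ?m ?m"
    "conj_tr W * W = 1\<^sub>m ?m" "W * conj_tr W = 1\<^sub>m ?m" "col W 0 = u" by auto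
  define A' where "A' = conj_tr W * (A * W)"
  have A': "A' \<in> carrier_mat ?m ?m" unfolding A'_def using A W by auto
  have cA': "conj_tr A' = conj_tr W * (conj_tr A * W)"
    unfolding A'_def using A W
    by (simp add: conj_tr_mult[of _ ?m ?m _ ?m] assoc_mult_mat[of _ ?m ?m _ ?m _ ?m])
  have sim: "(conj_tr W * (X * W)) * (conj_tr W * (Y * W)) = conj_tr W * ((X * Y) * W)"
    if X: "X \<in> carrier_mat ?m ?m" and Y: "Y \<in> carrier_mat ?m ?m" for X Y
  proof -
    have c: "W * (conj_tr W * Z) = Z" if "Z \<in> carrier_mat ?m ?m" for Z
      using W that by (simp flip: assoc_mult_mat[of _ ?m ?m _ ?m _ ?m])
    have "(conj_tr W * (X * W)) * (conj_tr W * (Y * W)) = conj_tr W * ((X * W) * (conj_tr W * (Y * W)))"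
      by (rule assoc_mult_mat[of _ ?m ?m _ ?m _ ?m], insert W X Y, auto)
    also have "(X * W) * (conj_tr W * (Y * W)) = X * (W * (conj_tr W * (Y * W)))"
      by (rule assoc_mult_mat[of _ ?m ?m _ ?m _ ?m], insert W X Y, auto)
    also have "W * (conj_tr W * (Y * W)) = Y * W" using c X Y W by auto
    also have "X * (Y * W) = (X * Y) * W"
      by (rule assoc_mult_mat[symmetric, of _ ?m ?m _ ?m _ ?m], insert W X Y, auto)
    finally show ?thesis .
  qed
  have nA': "A' * conj_tr A' = conj_tr A' * A'"
    unfolding cA' unfolding A'_def using sim[of A "conj_tr A"] sim[of "conj_tr A" A] nA A by simp
  have col0: "A' $$ (i,0) = (if i = 0 then e else 0)" if i: "i < ?m" for i
  proof -
    have "col (A * W) 0 = A *\<^sub>v col W 0" by (rule col_mult2[OF A W(1)], simp)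
    also have "\<dots> = e \<cdot>\<^sub>v col W 0" using u W by simp
    finally have cAW: "col (A * W) 0 = e \<cdot>\<^sub>v col W 0" .
    have "A' $$ (i,0) = row (conj_tr W) i \<bullet> col (A * W) 0" unfolding A'_def using A W i by simp
    also have "\<dots> = e * (row (conj_tr W) i \<bullet> col W 0)" unfolding cAW using W i u(1) by simp
    also have "row (conj_tr W) i \<bullet> col W 0 = (conj_tr W * W) $$ (i,0)"
      using W(1) i by (subst index_mult_mat, auto)
    also have "\<dots> = (if i = 0 then 1 else 0)" using W(2) i by simp
    finally show ?thesis by simp
  qed
  have row0: "A' $$ (0,j) = 0" if j: "0 < j" "j < ?m" for j
  proof -
    have "(A' * conj_tr A') $$ (0,0) = (\<Sum>l<?m. A' $$ (0,l) * cnj (A' $$ (0,l)))"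
      using A' by (simp add: scalar_prod_def atLeast0LessThan)
    also have "\<dots> = e * cnj e + (\<Sum>l<k. A' $$ (0,Suc l) * cnj (A' $$ (0,Suc l)))"
      by (subst sum.lessThan_Suc_shift, simp add: col0)
    finally have 1: "(A' * conj_tr A') $$ (0,0) = e * cnj e + (\<Sum>l<k. A' $$ (0,Suc l) * cnj (A' $$ (0,Suc l)))" .
    have "(conj_tr A' * A') $$ (0,0) = (\<Sum>l<?m. cnj (A' $$ (l,0)) * A' $$ (l,0))"
      using A' by (simp add: scalar_prod_def atLeast0LessThan)
    also have "\<dots> = cnj e * e"
      by (subst sum.lessThan_Suc_shift, simp add: col0)
    finally have 2: "(conj_tr A' * A') $$ (0,0) = cnj e * e" .
    from 1 2 nA' have "(\<Sum>l<k. A' $$ (0,Suc l) * cnj (A' $$ (0,Suc l))) = 0" by simp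
    then have "(\<Sum>l<k. complex_of_real ((cmod (A' $$ (0,Suc l)))\<^sup>2)) = 0"
      by (simp only: complex_norm_square)
    then have "(\<Sum>l<k. (cmod (A' $$ (0,Suc l)))\<^sup>2) = 0"
      by (metis of_real_sum of_real_eq_0_iff)
    then have "\<forall>l\<in>{..<k}. (cmod (A' $$ (0,Suc l)))\<^sup>2 = 0"
      by (subst sum_nonneg_eq_0_iff[symmetric], auto)
    then show ?thesis using j by (cases j, auto)
  qed
  define E where "E = mat 1 1 (\<lambda>_. e)"
  define A3 where "A3 = mat k k (\<lambda>(i,j). A' $$ (Suc i, Suc j))"
  have E: "E \<in> carrier_mat 1 1" and A3: "A3 \<in> carrier_mat k k" unfolding E_def A3_def by auto
  have A'b: "A' = four_block_mat E (0\<^sub>m 1 k) (0\<^sub>m k 1) A3"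
  proof (rule eq_matI)
    fix i j assume "i < dim_row (four_block_mat E (0\<^sub>m 1 k) (0\<^sub>m k 1) A3)"
      "j < dim_col (four_block_mat E (0\<^sub>m 1 k) (0\<^sub>m k 1) A3)"
    then have ij: "i < ?m" "j < ?m" using E A3 by auto
    show "A' $$ (i,j) = four_block_mat E (0\<^sub>m 1 k) (0\<^sub>m k 1) A3 $$ (i,j)"
      using ij E A3 col0 row0 unfolding E_def A3_def
      by (cases i; cases j; auto)
  qed (insert A' E A3, auto)
  have nA3: "A3 * conj_tr A3 = conj_tr A3 * A3"
  proof -
    have "four_block_mat (E * conj_tr E) (0\<^sub>m 1 k) (0\<^sub>m k 1) (A3 * conj_tr A3)
        = four_block_mat (conj_tr E * E) (0\<^sub>m 1 k) (0\<^sub>m k 1) (conj_tr A3 * A3)"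
      using nA' unfolding A'b bd_conj_tr[OF E A3]
      using bd_mult[OF E A3 conj_tr_carrier[OF E] conj_tr_carrier[OF A3]]
        bd_mult[OF conj_tr_carrier[OF E] conj_tr_carrier[OF A3] E A3] by simp
    note blk = this
    show ?thesis
      by (rule bd_D[where a=1 and b=1 and c=k and d=k, OF _ _ _ _ blk], insert E A3, auto)
  qed
  from Suc.IH[OF A3 nA3] obtain Q' L' where Q'L': "Q' \<in> carrier_mat k k" "L' \<in> carrier_mat k k"
    "diagonal_mat L'" "conj_tr Q' * Q' = 1\<^sub>m k" "Q' * conj_tr Q' = 1\<^sub>m k" "A3 = Q' * L' * conj_tr Q'"
    by blast
  define B where "B = four_block_mat (1\<^sub>m 1) (0\<^sub>m 1 k) (0\<^sub>m k 1) Q'"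
  define L where "L = four_block_mat E (0\<^sub>m 1 k) (0\<^sub>m k 1) L'"
  define Q where "Q = W * B"
  have B: "B \<in> carrier_mat ?m ?m" unfolding B_def using Q'L' by auto
  have L: "L \<in> carrier_mat ?m ?m" unfolding L_def using Q'L' E by auto
  have Q: "Q \<in> carrier_mat ?m ?m" unfolding Q_def using B W by auto
  have cB: "conj_tr B = four_block_mat (1\<^sub>m 1) (0\<^sub>m 1 k) (0\<^sub>m k 1) (conj_tr Q')"
    unfolding B_def by (subst bd_conj_tr[of _ 1 1 _ k k], insert Q'L', auto)
  have BB: "conj_tr B * B = 1\<^sub>m ?m"
  proof -
    have "conj_tr B * B = four_block_mat (1\<^sub>m 1 * 1\<^sub>m 1) (0\<^sub>m 1 k) (0\<^sub>m k 1) (conj_tr Q' * Q')"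
      unfolding cB unfolding B_def by (rule bd_mult, insert Q'L', auto)
    then show ?thesis using Q'L' by simp
  qed
  have BB': "B * conj_tr B = 1\<^sub>m ?m"
  proof -
    have "B * conj_tr B = four_block_mat (1\<^sub>m 1 * 1\<^sub>m 1) (0\<^sub>m 1 k) (0\<^sub>m k 1) (Q' * conj_tr Q')"
      unfolding cB unfolding B_def by (rule bd_mult, insert Q'L', auto)
    then show ?thesis using Q'L' by simp
  qed
  have BLB: "B * L * conj_tr B = A'"
  proof -
    have "B * L = four_block_mat (1\<^sub>m 1 * E) (0\<^sub>m 1 k) (0\<^sub>m k 1) (Q' * L')"
      unfolding L_def B_def by (rule bd_mult, insert Q'L' E, auto)
    also have "\<dots> = four_block_mat E (0\<^sub>m 1 k) (0\<^sub>m k 1) (Q' * L')" using E by simp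
    finally have BL: "B * L = four_block_mat E (0\<^sub>m 1 k) (0\<^sub>m k 1) (Q' * L')" .
    have "B * L * conj_tr B = four_block_mat (E * 1\<^sub>m 1) (0\<^sub>m 1 k) (0\<^sub>m k 1) (Q' * L' * conj_tr Q')"
      unfolding BL cB by (rule bd_mult, insert Q'L' E, auto)
    then show ?thesis unfolding A'b Q'L'(6) using E by simp
  qed
  have cQ: "conj_tr Q = conj_tr B * conj_tr W" unfolding Q_def by (rule conj_tr_mult[OF W(1) B])
  have cW: "conj_tr W \<in> carrier_mat ?m ?m" using W by simp
  have cB': "conj_tr B \<in> carrier_mat ?m ?m" using B by simp
  have QQ: "conj_tr Q * Q = 1\<^sub>m ?m"
  proof -
    have "conj_tr Q * Q = conj_tr B * (conj_tr W * (W * B))" unfolding cQ unfolding Q_def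
      using assoc_mult_mat[OF cB' cW mult_carrier_mat[OF W(1) B]] by simp
    then show ?thesis using cancel_left[OF cW W(1) W(2) B] BB by simp
  qed
  have QQ': "Q * conj_tr Q = 1\<^sub>m ?m"
  proof -
    have "Q * conj_tr Q = W * (B * (conj_tr B * conj_tr W))" unfolding cQ unfolding Q_def
      using assoc_mult_mat[OF W(1) B mult_carrier_mat[OF cB' cW]] by simp
    then show ?thesis using cancel_left[OF B cB' BB' cW] W by simp
  qed
  have AQ: "A = Q * L * conj_tr Q"
  proof -
    have "Q * L * conj_tr Q = W * B * L * (conj_tr B * conj_tr W)" unfolding cQ unfolding Q_def by simp
    also have "\<dots> = W * (B * L) * (conj_tr B * conj_tr W)"
      using assoc_mult_mat[OF W(1) B L] by simp
    also have "\<dots> = W * (B * L * (conj_tr B * conj_tr W))"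
      using assoc_mult_mat[OF W(1) mult_carrier_mat[OF B L] mult_carrier_mat[OF cB' cW]] by simp
    also have "B * L * (conj_tr B * conj_tr W) = B * L * conj_tr B * conj_tr W"
      using assoc_mult_mat[OF mult_carrier_mat[OF B L] cB' cW] by simp
    also have "\<dots> = conj_tr W * (A * W) * conj_tr W" by (simp add: BLB A'_def)
    also have "\<dots> = conj_tr W * (A * W * conj_tr W)"
      using assoc_mult_mat[OF cW mult_carrier_mat[OF A W(1)] cW] by simp
    also have "\<dots> = conj_tr W * (A * (W * conj_tr W))"
      using assoc_mult_mat[OF A W(1) cW] by simp
    also have "W * (conj_tr W * (A * (W * conj_tr W))) = A * (W * conj_tr W)"
      by (rule cancel_left[OF W(1) cW W(3)], insert A W, auto)
    finally show ?thesis using W A by simp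
  qed
  have dL: "diagonal_mat L" unfolding diagonal_mat_def
  proof (intro allI impI)
    fix i j assume ij: "i < dim_row L" "j < dim_col L" "i \<noteq> j"
    then show "L $$ (i,j) = 0" using Q'L' E unfolding L_def E_def
      by (cases i; cases j; auto simp: diagonal_mat_def)
  qed
  show ?case using Q L dL QQ QQ' AQ by blast
qed




lemma diag_right:
  assumes L: "L \<in> carrier_mat b b" "diagonal_mat L" and X: "X \<in> carrier_mat a b" and jk: "j < a" "k < b"
  shows "(X * L) $$ (j,k) = X $$ (j,k) * L $$ (k,k)"
proof -
  have "(X * L) $$ (j,k) = (\<Sum>l<b. X $$ (j,l) * L $$ (l,k))"
    using assms by (simp add: scalar_prod_def atLeast0LessThan)
  also have "\<dots> = (\<Sum>l<b. if l = k then X $$ (j,k) * L $$ (k,k) else 0)"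
    by (rule sum.cong, insert L jk, auto simp: diagonal_mat_def)
  finally show ?thesis using jk by simp
qed

lemma diag_left:
  assumes L: "L \<in> carrier_mat a a" "diagonal_mat L" and X: "X \<in> carrier_mat a b" and jk: "j < a" "k < b"
  shows "(L * X) $$ (j,k) = L $$ (j,j) * X $$ (j,k)"
proof -
  have "(L * X) $$ (j,k) = (\<Sum>l<a. L $$ (j,l) * X $$ (l,k))"
    using assms by (simp add: scalar_prod_def atLeast0LessThan)
  also have "\<dots> = (\<Sum>l<a. if l = j then L $$ (j,j) * X $$ (j,k) else 0)"
    by (rule sum.cong, insert L jk, auto simp: diagonal_mat_def)
  finally show ?thesis using jk by simp
qed

lemma J_carrier[simp]: "J_mat n \<in> carrier_mat (2*n) (2*n)"
  unfolding J_mat_def by (simp add: mult_2)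

lemma J_index:
  assumes "i < 2*n" "j < 2*n"
  shows "J_mat n $$ (i,j) = (if i < n \<and> j = i + n then 1 else if n \<le> i \<and> i = j + n then -1 else 0)"
  unfolding J_mat_def using assms by (subst index_mat_four_block, auto)

lemma J_conj_tr: "conj_tr (J_mat n) = - J_mat n"
proof -
  have c: "J_mat n \<in> carrier_mat (2*n) (2*n)" by simp
  have d: "dim_row (J_mat n) = 2*n" "dim_col (J_mat n) = 2*n" using carrier_matD[OF c] by auto
  show ?thesis
  proof (rule eq_matI)
    fix i j assume "i < dim_row (- J_mat n)" "j < dim_col (- J_mat n)"
    then have ij: "i < 2*n" "j < 2*n" using d by auto
    show "conj_tr (J_mat n) $$ (i, j) = (- J_mat n) $$ (i, j)"
      using ij d by (simp add: J_index)
  qed (use d in auto)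
qed

lemma J_sq: "J_mat n * J_mat n = - 1\<^sub>m (2*n)"
proof -
  have "J_mat n * J_mat n = four_block_mat (0\<^sub>m n n * 0\<^sub>m n n + 1\<^sub>m n * - 1\<^sub>m n) (0\<^sub>m n n * 1\<^sub>m n + 1\<^sub>m n * 0\<^sub>m n n)
      (- 1\<^sub>m n * 0\<^sub>m n n + 0\<^sub>m n n * - 1\<^sub>m n) (- 1\<^sub>m n * 1\<^sub>m n + 0\<^sub>m n n * 0\<^sub>m n n)"
    unfolding J_mat_def by (rule mult_four_block_mat, auto)
  also have "\<dots> = - 1\<^sub>m (2*n)" by (rule eq_matI, auto)
  finally show ?thesis .
qed




theorem lemma2p2:
  fixes n :: nat and W :: "complex mat"
  assumes "n \<ge> 1"
    and "W \<in> carrier_mat (2*n) (2*n)"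
    and "normal_mat W"
    and "skew_hamiltonian n W"
    and "\<forall>ev. eigenvalue W ev \<longrightarrow> Im ev \<noteq> 0"
  shows "\<exists>U D. U \<in> carrier_mat (2*n) (2*n) \<and> unitary_mat U \<and> symplectic n U \<and>
           D \<in> carrier_mat n n \<and> diagonal_mat D \<and>
           W = U * four_block_mat D (0\<^sub>m n n) (0\<^sub>m n n) (conj_tr D) * conj_tr U"
proof -
  define m where "m = 2 * n"
  have Wc: "W \<in> carrier_mat m m" using assms(2) unfolding m_def .
  have nW: "W * conj_tr W = conj_tr W * W" using assms(3) unfolding normal_mat_def by auto
  from spectral[OF Wc nW] obtain Q L where QL: "Q \<in> carrier_mat m m" "L \<in> carrier_mat m m"
    "diagonal_mat L" "conj_tr Q * Q = 1\<^sub>m m" "Q * conj_tr Q = 1\<^sub>m m" "W = Q * L * conj_tr Q" by blast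
  define J where "J = J_mat n"
  have Jc: "J \<in> carrier_mat m m" unfolding J_def m_def by simp
  have cJ: "conj_tr J = - J" unfolding J_def by (rule J_conj_tr)
  have JJ: "J * J = - 1\<^sub>m m" unfolding J_def m_def by (rule J_sq)
  have Qc: "Q \<in> carrier_mat m m" and Lc: "L \<in> carrier_mat m m" using QL by auto
  have cQc: "conj_tr Q \<in> carrier_mat m m" and cLc: "conj_tr L \<in> carrier_mat m m" using QL by auto
  have mc: "X * Y \<in> carrier_mat m m" if "X \<in> carrier_mat m m" "Y \<in> carrier_mat m m" for X Y
    using that by auto
  have as: "X * Y * Z = X * (Y * Z)" if "X \<in> carrier_mat m m" "Y \<in> carrier_mat m m" "Z \<in> carrier_mat m m" for X Y Z
    using assoc_mult_mat[OF that] .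
  have c1: "conj_tr Q * (Q * X) = X" if "X \<in> carrier_mat m m" for X
    by (rule cancel_left[OF cQc Qc QL(4) that])
  have c2: "Q * (conj_tr Q * X) = X" if "X \<in> carrier_mat m m" for X
    by (rule cancel_left[OF Qc cQc QL(5) that])
  have JJX: "J * (J * X) = - X" if "X \<in> carrier_mat m m" for X
    using assoc_mult_mat[OF Jc Jc that] JJ that by simp
  define A where "A = conj_tr Q * (J * Q)"
  have Ac: "A \<in> carrier_mat m m" unfolding A_def using Jc Qc by auto
  define lam where "lam k = L $$ (k,k)" for k
  have JW: "J * W = conj_tr W * J"
  proof -
    have "conj_tr (J * W) = - (J * W)" using assms(4) unfolding skew_hamiltonian_def J_def by auto
    moreover have "conj_tr (J * W) = - (conj_tr W * J)"
      using conj_tr_mult[OF Jc Wc] cJ uminus_mult_right_mat[of "conj_tr W" J] Jc Wc by simp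
    ultimately show ?thesis by simp
  qed
  have Wn: "W = Q * (L * conj_tr Q)" using QL(6) as[OF Qc Lc cQc] by simp
  have cW: "conj_tr W = Q * (conj_tr L * conj_tr Q)"
    unfolding Wn using conj_tr_mult[OF Qc mc[OF Lc cQc]] conj_tr_mult[OF Lc cQc] as[OF Qc cLc cQc] by simp
  have WQ: "W * Q = Q * L"
  proof -
    have "W * Q = Q * (L * conj_tr Q) * Q" unfolding Wn ..
    also have "\<dots> = Q * (L * (conj_tr Q * Q))"
      using as[OF Qc mc[OF Lc cQc] Qc] as[OF Lc cQc Qc] by simp
    finally show ?thesis using QL Lc by simp
  qed
  have AL: "A * L = conj_tr L * A"
  proof -
    have "A * L = conj_tr Q * (J * (Q * L))" unfolding A_def
      using as[OF cQc mc[OF Jc Qc] Lc] as[OF Jc Qc Lc] by simp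
    also have "\<dots> = conj_tr Q * ((J * W) * Q)" unfolding WQ[symmetric] using as[OF Jc Wc Qc] by simp
    also have "\<dots> = conj_tr Q * (Q * (conj_tr L * (conj_tr Q * (J * Q))))"
      unfolding JW cW
      using as[OF mc[OF Qc mc[OF cLc cQc]] Jc Qc] as[OF Qc mc[OF cLc cQc] mc[OF Jc Qc]]
        as[OF cLc cQc mc[OF Jc Qc]] by simp
    also have "\<dots> = conj_tr L * A" unfolding A_def
      by (rule c1[OF mc[OF cLc mc[OF cQc mc[OF Jc Qc]]]])
    finally show ?thesis .
  qed
  have ent: "A $$ (j,k) * lam k = cnj (lam j) * A $$ (j,k)" if jk: "j < m" "k < m" for j k
  proof -
    have dcL: "diagonal_mat (conj_tr L)" using QL(3) Lc unfolding diagonal_mat_def by auto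
    have "(A * L) $$ (j,k) = A $$ (j,k) * lam k" unfolding lam_def by (rule diag_right[OF Lc QL(3) Ac jk])
    moreover have "(conj_tr L * A) $$ (j,k) = cnj (lam j) * A $$ (j,k)" unfolding lam_def
      using diag_left[OF cLc dcL Ac jk] jk Lc by simp
    ultimately show ?thesis using AL by metis
  qed
  have entc: "lam k = cnj (lam j)" if jk: "j < m" "k < m" "A $$ (j,k) \<noteq> 0" for j k
    using ent[OF jk(1,2)] jk(3) by (simp add: mult.commute)
  have Imnz: "Im (lam k) \<noteq> 0" if k: "k < m" for k
  proof -
    have ev: "W *\<^sub>v col Q k = lam k \<cdot>\<^sub>v col Q k"
    proof (rule eq_vecI)
      fix i assume "i < dim_vec (lam k \<cdot>\<^sub>v col Q k)"
      then have i: "i < m" using Qc by auto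
      have "(W *\<^sub>v col Q k) $ i = (W * Q) $$ (i,k)" using Wc Qc i k by simp
      also have "\<dots> = Q $$ (i,k) * lam k" unfolding WQ lam_def by (rule diag_right[OF Lc QL(3) Qc i k])
      finally show "(W *\<^sub>v col Q k) $ i = (lam k \<cdot>\<^sub>v col Q k) $ i" using i k Qc by simp
    qed (use Wc Qc in auto)
    have nz: "col Q k \<noteq> 0\<^sub>v m"
    proof
      assume z: "col Q k = 0\<^sub>v m"
      have "(conj_tr Q * Q) $$ (k,k) = (\<Sum>i<m. cnj (Q $$ (i,k)) * Q $$ (i,k))"
        by (rule conj_tr_mult_index[OF Qc Qc k k])
      also have "\<dots> = 0"
      proof (rule sum.neutral, intro ballI)
        fix i assume "i \<in> {..<m}"
        then have "Q $$ (i,k) = col Q k $ i" using Qc k by simp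
        then show "cnj (Q $$ (i,k)) * Q $$ (i,k) = 0" using z \<open>i \<in> {..<m}\<close> by simp
      qed
      finally show False using QL(4) k by simp
    qed
    have "eigenvalue W (lam k)" unfolding eigenvalue_def eigenvector_def
      using ev nz Qc Wc k by (intro exI[of _ "col Q k"], auto)
    then show ?thesis using assms(5) by auto
  qed
  have cA: "conj_tr A = - A"
  proof -
    have "conj_tr A = conj_tr (J * Q) * Q" unfolding A_def
      using conj_tr_mult[OF cQc mc[OF Jc Qc]] by simp
    also have "\<dots> = - (conj_tr Q * J * Q)" using conj_tr_mult[OF Jc Qc] cJ
      uminus_mult_right_mat[of "conj_tr Q" J] uminus_mult_left_mat[of "conj_tr Q * J" Q]
      carrier_matD[OF Jc] carrier_matD[OF Qc] by simp
    finally show ?thesis unfolding A_def using as[OF cQc Jc Qc] by simp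
  qed
  have AA: "A * A = - 1\<^sub>m m"
  proof -
    have "A * A = conj_tr Q * (J * Q * (conj_tr Q * (J * Q)))" unfolding A_def
      using as[OF cQc mc[OF Jc Qc] Ac[unfolded A_def]] by simp
    also have "J * Q * (conj_tr Q * (J * Q)) = J * (Q * (conj_tr Q * (J * Q)))"
      using as[OF Jc Qc mc[OF cQc mc[OF Jc Qc]]] .
    also have "\<dots> = J * (J * Q)" using c2[OF mc[OF Jc Qc]] by simp
    also have "\<dots> = - Q" using JJX[OF Qc] .
    finally show ?thesis using QL(4) by simp
  qed
  have AHA: "conj_tr A * A = 1\<^sub>m m" using AA cA uminus_mult_left_mat[of A A] carrier_matD[OF Ac] by simp
  have AAH: "A * conj_tr A = 1\<^sub>m m" using AA cA uminus_mult_right_mat[of A A] carrier_matD[OF Ac] by simp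
  have skewent: "cnj (A $$ (k,r)) = - A $$ (r,k)" if "r < m" "k < m" for r k
  proof -
    have "conj_tr A $$ (r,k) = (- A) $$ (r,k)" using cA by simp
    then show ?thesis using that Ac by simp
  qed
  define P where "P = {k. k < m \<and> 0 < Im (lam k)}"
  define N where "N = {k. k < m \<and> Im (lam k) < 0}"
  have PN: "P \<union> N = {..<m}" "P \<inter> N = {}" using Imnz unfolding P_def N_def
    by (auto simp: neq_iff)
  have finP: "finite P" and finN: "finite N" unfolding P_def N_def by auto
  have zero_same: "A $$ (j,k) = 0" if "j \<in> P \<and> k \<in> P \<or> j \<in> N \<and> k \<in> N" for j k
  proof (rule ccontr)
    assume "A $$ (j,k) \<noteq> 0"
    from entc[OF _ _ this] that have "lam k = cnj (lam j)" unfolding P_def N_def by auto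
    then have "Im (lam k) = - Im (lam j)" by simp
    then show False using that unfolding P_def N_def by auto
  qed
  have colsum: "(\<Sum>j<m. cnj (A $$ (j,k)) * A $$ (j,k)) = 1" if k: "k < m" for k
    using conj_tr_mult_index[OF Ac Ac k k] AHA k by simp
  have rowsum: "(\<Sum>k<m. A $$ (j,k) * cnj (A $$ (j,k))) = 1" if j: "j < m" for j
  proof -
    have cAc: "conj_tr A \<in> carrier_mat m m" using Ac by simp
    have "(\<Sum>k<m. A $$ (j,k) * cnj (A $$ (j,k))) = (\<Sum>k<m. cnj (conj_tr A $$ (k,j)) * conj_tr A $$ (k,j))"
      by (rule sum.cong, insert Ac j, auto)
    also have "\<dots> = (conj_tr (conj_tr A) * conj_tr A) $$ (j,j)"
      by (rule conj_tr_mult_index[OF cAc cAc j j, symmetric])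
    finally show ?thesis using AAH j by simp
  qed
  have cardPN: "card P = card N"
  proof -
    have "(\<Sum>k\<in>P. (\<Sum>j<m. cnj (A $$ (j,k)) * A $$ (j,k))) = (\<Sum>k\<in>P. (1::complex))"
      by (rule sum.cong[OF refl], rule colsum, auto simp: P_def)
    then have "of_nat (card P) = (\<Sum>k\<in>P. (\<Sum>j<m. cnj (A $$ (j,k)) * A $$ (j,k)) :: complex)"
      by simp
    also have "\<dots> = (\<Sum>k\<in>P. \<Sum>j\<in>N. cnj (A $$ (j,k)) * A $$ (j,k))"
    proof (rule sum.cong[OF refl], rule sum.mono_neutral_right)
      fix k assume k: "k \<in> P"
      show "\<forall>j\<in>{..<m} - N. cnj (A $$ (j,k)) * A $$ (j,k) = 0"
      proof
        fix j assume "j \<in> {..<m} - N"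
        then have "j \<in> P" using PN by auto
        then have "A $$ (j,k) = 0" using zero_same k by blast
        then show "cnj (A $$ (j,k)) * A $$ (j,k) = 0" by simp
      qed
    qed (insert PN, auto)
    also have "\<dots> = (\<Sum>j\<in>N. \<Sum>k\<in>P. A $$ (j,k) * cnj (A $$ (j,k)))"
      by (subst sum.swap, rule sum.cong[OF refl], rule sum.cong[OF refl], rule mult.commute)
    also have "\<dots> = (\<Sum>j\<in>N. \<Sum>k<m. A $$ (j,k) * cnj (A $$ (j,k)))"
    proof (rule sum.cong[OF refl], rule sum.mono_neutral_right[symmetric])
      fix j assume j: "j \<in> N"
      show "\<forall>k\<in>{..<m} - P. A $$ (j,k) * cnj (A $$ (j,k)) = 0"
      proof
        fix k assume "k \<in> {..<m} - P"
        then have "k \<in> N" using PN by auto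
        then have "A $$ (j,k) = 0" using zero_same j by blast
        then show "A $$ (j,k) * cnj (A $$ (j,k)) = 0" by simp
      qed
    qed (insert PN, auto)
    also have "\<dots> = (\<Sum>j\<in>N. (1::complex))"
      by (rule sum.cong[OF refl], rule rowsum, auto simp: N_def)
    also have "\<dots> = of_nat (card N)" by simp
    finally show ?thesis by (simp only: of_nat_eq_iff)
  qed
  have cardP: "card P = n"
  proof -
    have "card P + card N = m" using card_Un_disjoint[OF finP finN PN(2)] PN(1) by simp
    then show ?thesis using cardPN unfolding m_def by simp
  qed
  define ps where "ps = sorted_list_of_set P"
  define p where "p i = ps ! i" for i
  have ps: "set ps = P" "distinct ps" "length ps = n" unfolding ps_def using finP cardP by auto
  have pP: "p i \<in> P" if "i < n" for i unfolding p_def using ps that by auto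
  have pm: "p i < m" if "i < n" for i using pP[OF that] unfolding P_def by auto
  have pinj: "p i = p j \<longleftrightarrow> i = j" if "i < n" "j < n" for i j
    unfolding p_def using nth_eq_iff_index_eq[OF ps(2)] ps(3) that by auto
  have mn: "m = n + n" unfolding m_def by simp
  define S where "S = mat m m (\<lambda>(r,c). if c < n then (if r = p c then 1 else 0) else - A $$ (r, p (c - n)))"
  have Sc: "S \<in> carrier_mat m m" unfolding S_def by simp
  have Sidx: "S $$ (r,c) = (if c < n then (if r = p c then 1 else 0) else - A $$ (r, p (c - n)))"
    if "r < m" "c < m" for r c unfolding S_def using that by simp
  have SS: "conj_tr S * S = 1\<^sub>m m"
  proof (rule eq_matI)
    fix c d assume "c < dim_row (1\<^sub>m m)" "d < dim_col (1\<^sub>m m)"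
    then have cd: "c < m" "d < m" by auto
    have e: "(conj_tr S * S) $$ (c,d) = (\<Sum>r<m. cnj (S $$ (r,c)) * S $$ (r,d))"
      by (rule conj_tr_mult_index[OF Sc Sc cd])
    show "(conj_tr S * S) $$ (c,d) = 1\<^sub>m m $$ (c,d)"
    proof (cases "c < n")
      case c: True
      have "(\<Sum>r<m. cnj (S $$ (r,c)) * S $$ (r,d)) = (\<Sum>r<m. if r = p c then S $$ (p c, d) else 0)"
        by (rule sum.cong, insert cd c, auto simp: Sidx)
      also have "\<dots> = S $$ (p c, d)" using pm[OF c] by simp
      also have "\<dots> = 1\<^sub>m m $$ (c,d)"
      proof (cases "d < n")
        case True
        then show ?thesis using cd c pm pinj by (simp add: Sidx)
      next
        case False
        then have "A $$ (p c, p (d - n)) = 0" using zero_same pP c cd unfolding m_def by simp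
        then show ?thesis using cd c pm False by (simp add: Sidx)
      qed
      finally show ?thesis using e by simp
    next
      case c: False
      show ?thesis
      proof (cases "d < n")
        case d: True
        have "(\<Sum>r<m. cnj (S $$ (r,c)) * S $$ (r,d)) = (\<Sum>r<m. if r = p d then cnj (S $$ (p d, c)) else 0)"
          by (rule sum.cong, insert cd d, auto simp: Sidx)
        also have "\<dots> = cnj (S $$ (p d, c))" using pm[OF d] by simp
        also have "\<dots> = 0"
        proof -
          have "A $$ (p d, p (c - n)) = 0" using zero_same pP d cd c unfolding m_def by simp
          then show ?thesis using cd c pm[OF d] by (simp add: Sidx)
        qed
        finally show ?thesis using e c d cd by simp
      next
        case d: False
        have cn: "c - n < n" "d - n < n" using cd unfolding m_def by auto
        have "(\<Sum>r<m. cnj (S $$ (r,c)) * S $$ (r,d)) = (\<Sum>r<m. cnj (A $$ (r, p (c-n))) * A $$ (r, p (d-n)))"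
          by (rule sum.cong, insert cd c d, auto simp: Sidx)
        also have "\<dots> = (conj_tr A * A) $$ (p (c-n), p (d-n))"
          by (rule conj_tr_mult_index[OF Ac Ac pm[OF cn(1)] pm[OF cn(2)], symmetric])
        also have "\<dots> = (if c = d then 1 else 0)" using AHA pm cn pinj[OF cn] c d by auto
        finally show ?thesis using e cd by simp
      qed
    qed
  qed (insert Sc, auto)
  have SS': "S * conj_tr S = 1\<^sub>m m"
    using mat_mult_left_right_inverse[OF conj_tr_carrier[OF Sc] Sc SS] .
  define D where "D = mat n n (\<lambda>(i,j). if i = j then lam (p i) else 0)"
  define Df where "Df = four_block_mat D (0\<^sub>m n n) (0\<^sub>m n n) (conj_tr D)"
  have Dc: "D \<in> carrier_mat n n" unfolding D_def by simp
  have dD: "diagonal_mat D" unfolding D_def diagonal_mat_def by simp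
  have Dfc: "Df \<in> carrier_mat m m" unfolding Df_def mn using Dc by auto
  have Dfidx: "Df $$ (i,j) = (if i = j then (if i < n then lam (p i) else cnj (lam (p (i - n)))) else 0)"
    if "i < m" "j < m" for i j
    unfolding Df_def using that Dc unfolding mn by (subst index_mat_four_block, auto simp: D_def)
  have dDf: "diagonal_mat Df" unfolding diagonal_mat_def using Dfidx Dfc by auto
  have LS: "L * S = S * Df"
  proof (rule eq_matI)
    fix r c assume "r < dim_row (S * Df)" "c < dim_col (S * Df)"
    then have rc: "r < m" "c < m" using Sc Dfc by auto
    have l: "(L * S) $$ (r,c) = lam r * S $$ (r,c)" unfolding lam_def by (rule diag_left[OF Lc QL(3) Sc rc])
    have rr: "(S * Df) $$ (r,c) = S $$ (r,c) * Df $$ (c,c)" by (rule diag_right[OF Dfc dDf Sc rc])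
    show "(L * S) $$ (r,c) = (S * Df) $$ (r,c)"
    proof (cases "c < n")
      case True
      then show ?thesis unfolding l rr using rc by (simp add: Sidx Dfidx)
    next
      case False
      have cn: "c - n < n" using rc unfolding m_def by auto
      have "lam r * A $$ (r, p (c-n)) = A $$ (r, p (c-n)) * cnj (lam (p (c-n)))"
      proof (cases "A $$ (r, p (c-n)) = 0")
        case False
        from entc[OF rc(1) pm[OF cn] False] show ?thesis by simp
      qed simp
      then show ?thesis unfolding l rr using rc False by (simp add: Sidx Dfidx)
    qed
  qed (insert Sc Dfc Lc, auto)
  have AAidx: "(A * A) $$ (r,j) = (\<Sum>k<m. A $$ (r,k) * A $$ (k,j))" if "r < m" "j < m" for r j
    using that Ac by (simp add: scalar_prod_def atLeast0LessThan)
  have Jidx: "J $$ (i,j) = (if i < n \<and> j = i + n then 1 else if n \<le> i \<and> i = j + n then -1 else 0)"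
    if "i < m" "j < m" for i j unfolding J_def using J_index[of i n j] that unfolding m_def by simp
  have AS: "A * S = S * J"
  proof (rule eq_matI)
    fix r c assume "r < dim_row (S * J)" "c < dim_col (S * J)"
    then have rc: "r < m" "c < m" using Sc Jc by auto
    have l: "(A * S) $$ (r,c) = (\<Sum>k<m. A $$ (r,k) * S $$ (k,c))"
      using rc Ac Sc by (simp add: scalar_prod_def atLeast0LessThan)
    have rr: "(S * J) $$ (r,c) = (\<Sum>k<m. S $$ (r,k) * J $$ (k,c))"
      using rc Jc Sc by (simp add: scalar_prod_def atLeast0LessThan)
    show "(A * S) $$ (r,c) = (S * J) $$ (r,c)"
    proof (cases "c < n")
      case c: True
      have "(\<Sum>k<m. A $$ (r,k) * S $$ (k,c)) = (\<Sum>k<m. if k = p c then A $$ (r, p c) else 0)"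
        by (rule sum.cong, insert rc c, auto simp: Sidx)
      also have "\<dots> = A $$ (r, p c)" using pm[OF c] by simp
      finally have 1: "(A * S) $$ (r,c) = A $$ (r, p c)" using l by simp
      have "(\<Sum>k<m. S $$ (r,k) * J $$ (k,c)) = (\<Sum>k<m. if k = c + n then - S $$ (r, c + n) else 0)"
        by (rule sum.cong, insert rc c, auto simp: Jidx)
      also have "\<dots> = - S $$ (r, c + n)" using c unfolding m_def by simp
      also have "\<dots> = A $$ (r, p c)" using c rc unfolding m_def by (simp add: Sidx[unfolded m_def])
      finally show ?thesis using 1 rr by simp
    next
      case c: False
      have cn: "c - n < n" using rc unfolding m_def by auto
      have "(\<Sum>k<m. A $$ (r,k) * S $$ (k,c)) = - (\<Sum>k<m. A $$ (r,k) * A $$ (k, p (c - n)))"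
        by (subst sum_negf[symmetric], rule sum.cong, insert rc c, auto simp: Sidx)
      also have "\<dots> = - (A * A) $$ (r, p (c - n))" using AAidx[OF rc(1) pm[OF cn]] by simp
      also have "\<dots> = (if r = p (c - n) then 1 else 0)" using AA rc pm[OF cn] by simp
      finally have 1: "(A * S) $$ (r,c) = (if r = p (c - n) then 1 else 0)" using l by simp
      have "(\<Sum>k<m. S $$ (r,k) * J $$ (k,c)) = (\<Sum>k<m. if k = c - n then S $$ (r, c - n) else 0)"
        by (rule sum.cong, insert rc c, auto simp: Jidx, auto simp: m_def)
      also have "\<dots> = S $$ (r, c - n)" using cn unfolding m_def by simp
      also have "\<dots> = (if r = p (c - n) then 1 else 0)" using cn rc unfolding m_def
        by (simp add: Sidx[unfolded m_def])
      finally show ?thesis using 1 rr by simp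
    qed
  qed (insert Sc Jc Ac, auto)
  define U where "U = Q * S"
  have Uc: "U \<in> carrier_mat m m" unfolding U_def using Qc Sc by auto
  have cSc: "conj_tr S \<in> carrier_mat m m" using Sc by simp
  have cU: "conj_tr U = conj_tr S * conj_tr Q" unfolding U_def by (rule conj_tr_mult[OF Qc Sc])
  have UU: "conj_tr U * U = 1\<^sub>m m"
  proof -
    have "conj_tr U * U = conj_tr S * (conj_tr Q * (Q * S))" unfolding cU unfolding U_def
      using as[OF cSc cQc mc[OF Qc Sc]] .
    then show ?thesis using c1[OF Sc] SS by simp
  qed
  have UU': "U * conj_tr U = 1\<^sub>m m"
  proof -
    have "U * conj_tr U = Q * (S * (conj_tr S * conj_tr Q))" unfolding cU unfolding U_def
      using as[OF Qc Sc mc[OF cSc cQc]] .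
    then show ?thesis using cancel_left[OF Sc cSc SS' cQc] QL(5) by simp
  qed
  have symp: "conj_tr U * J * U = J"
  proof -
    have "conj_tr U * J * U = conj_tr S * (conj_tr Q * (J * (Q * S)))" unfolding cU unfolding U_def
      using as[OF mc[OF cSc cQc] Jc mc[OF Qc Sc]] as[OF cSc cQc mc[OF Jc mc[OF Qc Sc]]] by simp
    also have "conj_tr Q * (J * (Q * S)) = A * S" unfolding A_def
      using as[OF cQc mc[OF Jc Qc] Sc] as[OF Jc Qc Sc] by simp
    also have "conj_tr S * (A * S) = conj_tr S * (S * J)" unfolding AS ..
    also have "\<dots> = J" using assoc_mult_mat[OF cSc Sc Jc, symmetric] SS Jc by simp
    finally show ?thesis .
  qed
  have Wfin: "W = U * Df * conj_tr U"
  proof -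
    have "U * Df * conj_tr U = Q * (S * Df * (conj_tr S * conj_tr Q))" unfolding cU unfolding U_def
      using as[OF Qc Sc Dfc] as[OF Qc mc[OF Sc Dfc] mc[OF cSc cQc]] by simp
    also have "S * Df * (conj_tr S * conj_tr Q) = L * (S * (conj_tr S * conj_tr Q))"
      unfolding LS[symmetric] using as[OF Lc Sc mc[OF cSc cQc]] .
    also have "S * (conj_tr S * conj_tr Q) = conj_tr Q" by (rule cancel_left[OF Sc cSc SS' cQc])
    finally show ?thesis using Wn by simp
  qed
  show ?thesis
  proof (intro exI conjI)
    show "U \<in> carrier_mat (2*n) (2*n)" using Uc unfolding m_def .
    show "unitary_mat U" unfolding unitary_mat_def using Uc UU UU' by auto
    show "symplectic n U" unfolding symplectic_def using Uc symp unfolding m_def J_def by auto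
    show "D \<in> carrier_mat n n" by (rule Dc)
    show "diagonal_mat D" by (rule dD)
    show "W = U * four_block_mat D (0\<^sub>m n n) (0\<^sub>m n n) (conj_tr D) * conj_tr U"
      using Wfin unfolding Df_def .
  qed
qed


end
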